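(* Let $\mathcal{S}\subset(\mathbb{N}\cup\{\infty\})^6$ be the set of the following 13 vectors: $B=(\infty,\infty,\infty,\infty,\infty,\infty)$, $2S=(\infty,\infty,\infty,\infty,\infty,1)$, $RS=(\infty,\infty,\infty,\infty,1,1)$, $PF=(\infty,2,\infty,\infty,\infty,1)$, $S=(\infty,\infty,\infty,\infty,0,0)$, $RT=(\infty,\infty,\infty,1,1,1)$, $FT=(\infty,\infty,\infty,0,1,1)$, $R=(\infty,2,1,1,1,1)$, $RV=(\infty,2,1,0,1,1)$, $IF=(\infty,2,0,0,\infty,1)$, $F=(\infty,2,0,0,1,1)$, $T=(\infty,1,0,0,0,0)$, $E=(1,1,0,0,0,0)$. Then $\mathcal{S}$ is not a sublattice of $(\mathbb{N}\cup\{\infty\})^6$ under componentwise $\min/\max$, and the sublattice $L_{30}$ it generates has exactly $30$ elements (so the closure adds $17$ elements not in $\mathcal{S}$); moreover, iterating the operation of adjoining all pairwise componentwise meets and joins stabilizes after three rounds.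
   Context: $(\mathbb{N}\cup\{\infty\})^6$ is ordered componentwise with $\infty$ above every natural number; meet and join are componentwise $\min$ and $\max$. These 13 vectors are Bisping's energy vectors of the named equivalences (bisimulation, 2-nested simulation, ready simulation, possible futures, simulation, ready traces, failure traces, readiness, revivals, impossible futures, failures, traces, enabledness). *)

theory Defs
  imports Main "HOL-Library.Extended_Nat"
begin

text \<open>Vectors of (N \<union> {\<infinity>})^6 are represented as enat lists of length 6;
  meet/join are componentwise min/max.\<close>

definition vmeet :: "enat list \<Rightarrow> enat list \<Rightarrow> enat list" where
  "vmeet xs ys = map2 min xs ys"

definition vjoin :: "enat list \<Rightarrow> enat list \<Rightarrow> enat list" where
  "vjoin xs ys = map2 max xs ys"

definition closed_lat :: "enat list set \<Rightarrow> bool" where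
  "closed_lat X \<longleftrightarrow> (\<forall>a\<in>X. \<forall>b\<in>X. vmeet a b \<in> X \<and> vjoin a b \<in> X)"

inductive_set gen_lat :: "enat list set \<Rightarrow> enat list set" for X where
  base: "a \<in> X \<Longrightarrow> a \<in> gen_lat X"
| meet: "a \<in> gen_lat X \<Longrightarrow> b \<in> gen_lat X \<Longrightarrow> vmeet a b \<in> gen_lat X"
| join: "a \<in> gen_lat X \<Longrightarrow> b \<in> gen_lat X \<Longrightarrow> vjoin a b \<in> gen_lat X"

definition lat_step :: "enat list set \<Rightarrow> enat list set" where
  "lat_step X = X \<union> {vmeet a b | a b. a \<in> X \<and> b \<in> X} \<union> {vjoin a b | a b. a \<in> X \<and> b \<in> X}"

definition B_v :: "enat list" where "B_v = [\<infinity>,\<infinity>,\<infinity>,\<infinity>,\<infinity>,\<infinity>]"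
definition S2_v :: "enat list" where "S2_v = [\<infinity>,\<infinity>,\<infinity>,\<infinity>,\<infinity>,1]"
definition RS_v :: "enat list" where "RS_v = [\<infinity>,\<infinity>,\<infinity>,\<infinity>,1,1]"
definition PF_v :: "enat list" where "PF_v = [\<infinity>,2,\<infinity>,\<infinity>,\<infinity>,1]"
definition S_v :: "enat list" where "S_v = [\<infinity>,\<infinity>,\<infinity>,\<infinity>,0,0]"
definition RT_v :: "enat list" where "RT_v = [\<infinity>,\<infinity>,\<infinity>,1,1,1]"
definition FT_v :: "enat list" where "FT_v = [\<infinity>,\<infinity>,\<infinity>,0,1,1]"
definition R_v :: "enat list" where "R_v = [\<infinity>,2,1,1,1,1]"
definition RV_v :: "enat list" where "RV_v = [\<infinity>,2,1,0,1,1]"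
definition IF_v :: "enat list" where "IF_v = [\<infinity>,2,0,0,\<infinity>,1]"
definition F_v :: "enat list" where "F_v = [\<infinity>,2,0,0,1,1]"
definition T_v :: "enat list" where "T_v = [\<infinity>,1,0,0,0,0]"
definition E_v :: "enat list" where "E_v = [1,1,0,0,0,0]"

definition Spectrum :: "enat list set" where
  "Spectrum = {B_v, S2_v, RS_v, PF_v, S_v, RT_v, FT_v, R_v, RV_v, IF_v, F_v, T_v, E_v}"

end

theory Submission
  imports Defs
begin

definition SL :: "enat list list" where
  "SL = [B_v, S2_v, RS_v, PF_v, S_v, RT_v, FT_v, R_v, RV_v, IF_v, F_v, T_v, E_v]"
definition L1 :: "enat list list" where "L1 = [[1,1,0,0,0,0], [\<infinity>,1,0,0,0,0], [\<infinity>,2,0,0,0,0], [\<infinity>,2,0,0,1,1], [\<infinity>,2,0,0,\<infinity>,1], [\<infinity>,2,1,0,0,0], [\<infinity>,2,1,0,1,1], [\<infinity>,2,1,0,\<infinity>,1], [\<infinity>,2,1,1,0,0], [\<infinity>,2,1,1,1,1], [\<infinity>,2,1,1,\<infinity>,1], [\<infinity>,2,\<infinity>,0,1,1], [\<infinity>,2,\<infinity>,1,1,1], [\<infinity>,2,\<infinity>,\<infinity>,0,0], [\<infinity>,2,\<infinity>,\<infinity>,1,1], [\<infinity>,2,\<infinity>,\<infinity>,\<infinity>,1], [\<infinity>,\<infinity>,\<infinity>,0,0,0], [\<infinity>,\<infinity>,\<infinity>,0,1,1], [\<infinity>,\<infinity>,\<infinity>,0,\<infinity>,1], [\<infinity>,\<infinity>,\<infinity>,1,0,0],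 [\<infinity>,\<infinity>,\<infinity>,1,1,1], [\<infinity>,\<infinity>,\<infinity>,1,\<infinity>,1], [\<infinity>,\<infinity>,\<infinity>,\<infinity>,0,0], [\<infinity>,\<infinity>,\<infinity>,\<infinity>,1,1], [\<infinity>,\<infinity>,\<infinity>,\<infinity>,\<infinity>,1], [\<infinity>,\<infinity>,\<infinity>,\<infinity>,\<infinity>,\<infinity>]]"
definition L2 :: "enat list list" where "L2 = [[1,1,0,0,0,0], [\<infinity>,1,0,0,0,0], [\<infinity>,2,0,0,0,0], [\<infinity>,2,0,0,1,1], [\<infinity>,2,0,0,\<infinity>,1], [\<infinity>,2,1,0,0,0], [\<infinity>,2,1,0,1,1], [\<infinity>,2,1,0,\<infinity>,1], [\<infinity>,2,1,1,0,0], [\<infinity>,2,1,1,1,1], [\<infinity>,2,1,1,\<infinity>,1], [\<infinity>,2,\<infinity>,0,0,0], [\<infinity>,2,\<infinity>,0,1,1], [\<infinity>,2,\<infinity>,0,\<infinity>,1], [\<infinity>,2,\<infinity>,1,0,0], [\<infinity>,2,\<infinity>,1,1,1], [\<infinity>,2,\<infinity>,1,\<infinity>,1], [\<infinity>,2,\<infinity>,\<infinity>,0,0], [\<infinity>,2,\<infinity>,\<infinity>,1,1], [\<infinity>,2,\<infinity>,\<infinity>,\<infinity>,1], [\<infinity>,\<infinity>,\<infinity>,0,0,0], [\<infinity>,\<infinity>,\<infinity>,0,1,1], [\<infinity>,\<infinity>,\<infinity>,0,\<infinity>,1], [\<infinity>,\<infinity>,\<infinity>,1,0,0], [\<infinity>,\<infinity>,\<infinity>,1,1,1],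 [\<infinity>,\<infinity>,\<infinity>,1,\<infinity>,1], [\<infinity>,\<infinity>,\<infinity>,\<infinity>,0,0], [\<infinity>,\<infinity>,\<infinity>,\<infinity>,1,1], [\<infinity>,\<infinity>,\<infinity>,\<infinity>,\<infinity>,1], [\<infinity>,\<infinity>,\<infinity>,\<infinity>,\<infinity>,\<infinity>]]"

lemma Spectrum_SL: "Spectrum = set SL"
  by (simp add: Spectrum_def SL_def)

lemma step_list: "lat_step (set xs) = set (xs @ concat (map (\<lambda>a. map (vmeet a) xs) xs) @ concat (map (\<lambda>a. map (vjoin a) xs) xs))"
  unfolding lat_step_def by auto

lemma st1: "lat_step (set SL) = set L1"
  unfolding step_list by code_simp

lemma st2: "lat_step (set L1) = set L2"
  unfolding step_list by code_simp

lemma st3: "lat_step (set L2) = set L2"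
  unfolding step_list by code_simp

lemma ne1: "set L1 \<noteq> set SL"
  by code_simp

lemma ne2: "set L2 \<noteq> set L1"
  by code_simp

lemma cardL2: "card (set L2) = 30"
  by code_simp

lemma cardL2d: "card (set L2 - set SL) = 17"
  by code_simp

lemma SL_L2: "set SL \<subseteq> set L2"
  by code_simp

lemma notcl: "\<not> closed_lat (set SL)"
  unfolding closed_lat_def by code_simp

lemma closedL2: "closed_lat (set L2)"
  using st3 unfolding lat_step_def closed_lat_def by blast

lemma step_sub_gen: "X \<subseteq> gen_lat Y \<Longrightarrow> lat_step X \<subseteq> gen_lat Y"
  unfolding lat_step_def by (auto intro: gen_lat.meet gen_lat.join)

lemma pow_sub: "(lat_step ^^ k) (set SL) \<subseteq> gen_lat (set SL)"
  by (induction k) (auto intro: gen_lat.base simp: step_sub_gen)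

lemma pow2: "k \<ge> 2 \<Longrightarrow> (lat_step ^^ k) (set SL) = set L2"
proof (induction k rule: dec_induct)
  case base
  then show ?case by (simp add: numeral_2_eq_2 st1 st2)
next
  case (step n)
  then show ?case by (simp add: st3)
qed

lemma gen_eq: "gen_lat (set SL) = set L2"
proof
  show "gen_lat (set SL) \<subseteq> set L2"
  proof
    fix x assume "x \<in> gen_lat (set SL)"
    then show "x \<in> set L2"
      by induction (use SL_L2 closedL2 in \<open>auto simp: closed_lat_def\<close>)
  qed
next
  show "set L2 \<subseteq> gen_lat (set SL)" using pow_sub[of 2] pow2[of 2] by simp
qed

theorem mainTheorem10:
  shows "\<not> closed_lat Spectrum
    \<and> card (gen_lat Spectrum) = 30
    \<and> card (gen_lat Spectrum - Spectrum) = 17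
    \<and> (lat_step ^^ 1) Spectrum \<noteq> Spectrum
    \<and> (lat_step ^^ 2) Spectrum \<noteq> (lat_step ^^ 1) Spectrum
    \<and> (lat_step ^^ 3) Spectrum = (lat_step ^^ 2) Spectrum
    \<and> (\<forall>k\<ge>2. (lat_step ^^ k) Spectrum = gen_lat Spectrum)"
  unfolding Spectrum_SL gen_eq
  using notcl cardL2 cardL2d st1 ne1 ne2 pow2[of 2] pow2[of 3] pow2
  by (simp add: numeral_2_eq_2)

end
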